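(* Let $X$ be a finite connected poset and $\theta\in\mathcal{M}(X)$. Then $C\sim D$ implies $\theta(C)\sim\theta(D)$, so $\theta$ induces a map $\widetilde\theta$ on $\mathcal{C}(X)/{\sim}$ sending the class of $C$ to the class of $\theta(C)$, and $\widetilde\theta$ is a bijection. Moreover, if $\theta$ is increasing (resp. decreasing) on $C\in\mathcal{C}(X)$, then it is increasing (resp. decreasing) on every $D\in\mathcal{C}(X)$ with $D\sim C$.
   Context: $\mathcal{C}(X)$ is the set of maximal chains; $\mathrm{Min}(X)$, $\mathrm{Max}(X)$ the minimal and maximal elements. Two maximal chains are linked if they share an element lying in neither $\mathrm{Min}(X)$ nor $\mathrm{Max}(X)$; $\sim$ is the equivalence relation on $\mathcal{C}(X)$ generated by linkedness. For $x<y$, $e_{xy}$ denotes the incidence-algebra basis element and $B=\{e_{xy}:x<y\}$. For a bijection $\theta:B\to B$ and $C:u_1<\dots<u_m$ in $\mathcal{C}(X)$, $\theta$ is increasing on $C$ if there is $D:v_1<\dots<v_m$ in $\mathcal{C}(X)$ with $\theta(e_{u_iu_j})=e_{v_iv_j}$ for all $i<j$, decreasing if $\theta(e_{u_iu_j})=e_{v_{m-j+1}v_{m-i+1}}$ for all $i<j$; in either case write $\theta(C)=D$. $\mathcal{M}(X)$ is the set of bijections $B\to B$ increasing or decreasing on every maximal chain. *)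

theory Defs
  imports Main
begin

text \<open>A finite poset is modelled as a finite carrier set X inside an ordered type,
  with the induced order. The basis element e_xy (x<y) is modelled by the pair (x,y).\<close>

definition poset_connected :: "'a::order set \<Rightarrow> bool" where
  "poset_connected X \<longleftrightarrow> X \<noteq> {} \<and>
     (\<forall>x\<in>X. \<forall>y\<in>X. (x, y) \<in> ({(a, b). a \<in> X \<and> b \<in> X \<and> (a \<le> b \<or> b \<le> a)})\<^sup>*)"

definition is_chain :: "'a::order set \<Rightarrow> 'a set \<Rightarrow> bool" where
  "is_chain X C \<longleftrightarrow> C \<subseteq> X \<and> (\<forall>x\<in>C. \<forall>y\<in>C. x \<le> y \<or> y \<le> x)"

definition max_chains :: "'a::order set \<Rightarrow> 'a set set" where
  "max_chains X = {C. is_chain X C \<and> (\<forall>C'. is_chain X C' \<and> C \<subseteq> C' \<longrightarrow> C' = C)}"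

definition min_elems :: "'a::order set \<Rightarrow> 'a set" where
  "min_elems X = {x \<in> X. \<not> (\<exists>y\<in>X. y < x)}"

definition max_elems :: "'a::order set \<Rightarrow> 'a set" where
  "max_elems X = {x \<in> X. \<not> (\<exists>y\<in>X. x < y)}"

definition linked :: "'a::order set \<Rightarrow> ('a set \<times> 'a set) set" where
  "linked X = {(C, D). C \<in> max_chains X \<and> D \<in> max_chains X \<and>
      (\<exists>x \<in> C \<inter> D. x \<notin> min_elems X \<and> x \<notin> max_elems X)}"

definition chain_equiv :: "'a::order set \<Rightarrow> ('a set \<times> 'a set) set" where
  "chain_equiv X = {(C, D). C \<in> max_chains X \<and> D \<in> max_chains X \<and>
      (C, D) \<in> (linked X \<union> (linked X)\<inverse>)\<^sup>*}"

definition basis :: "'a::order set \<Rightarrow> ('a \<times> 'a) set" where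
  "basis X = {(x, y). x \<in> X \<and> y \<in> X \<and> x < y}"

text \<open>theta is increasing on C with theta(C) = D: listing C as u_1<...<u_m and D as
  v_1<...<v_m, theta(e_{u_i u_j}) = e_{v_i v_j} for all i<j (0-based indices below).\<close>
definition increasing_to :: "'a::order set \<Rightarrow> ('a \<times> 'a \<Rightarrow> 'a \<times> 'a) \<Rightarrow> 'a set \<Rightarrow> 'a set \<Rightarrow> bool" where
  "increasing_to X \<theta> C D \<longleftrightarrow> C \<in> max_chains X \<and> D \<in> max_chains X \<and>
     (\<exists>u v. sorted_wrt (<) u \<and> set u = C \<and> sorted_wrt (<) v \<and> set v = D \<and>
        length u = length v \<and>
        (\<forall>i j. i < j \<and> j < length u \<longrightarrow> \<theta> (u ! i, u ! j) = (v ! i, v ! j)))"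

text \<open>theta is decreasing on C with theta(C) = D: theta(e_{u_i u_j}) = e_{v_{m-j+1} v_{m-i+1}}
  (1-based), i.e. with 0-based indices v!(m-1-j), v!(m-1-i).\<close>
definition decreasing_to :: "'a::order set \<Rightarrow> ('a \<times> 'a \<Rightarrow> 'a \<times> 'a) \<Rightarrow> 'a set \<Rightarrow> 'a set \<Rightarrow> bool" where
  "decreasing_to X \<theta> C D \<longleftrightarrow> C \<in> max_chains X \<and> D \<in> max_chains X \<and>
     (\<exists>u v. sorted_wrt (<) u \<and> set u = C \<and> sorted_wrt (<) v \<and> set v = D \<and>
        length u = length v \<and>
        (\<forall>i j. i < j \<and> j < length u \<longrightarrow>
           \<theta> (u ! i, u ! j) = (v ! (length u - 1 - j), v ! (length u - 1 - i))))"

definition chain_image :: "'a::order set \<Rightarrow> ('a \<times> 'a \<Rightarrow> 'a \<times> 'a) \<Rightarrow> 'a set \<Rightarrow> 'a set \<Rightarrow> bool" where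
  "chain_image X \<theta> C D \<longleftrightarrow> increasing_to X \<theta> C D \<or> decreasing_to X \<theta> C D"

definition M_set :: "'a::order set \<Rightarrow> ('a \<times> 'a \<Rightarrow> 'a \<times> 'a) set" where
  "M_set X = {\<theta>. bij_betw \<theta> (basis X) (basis X) \<and>
      (\<forall>C \<in> max_chains X. \<exists>D. chain_image X \<theta> C D)}"

end

theory Submission
  imports Defs
begin


definition cpairs :: "'a::order set \<Rightarrow> ('a \<times> 'a) set" where
  "cpairs C = {(a, b). a \<in> C \<and> b \<in> C \<and> a < b}"

lemma sorted_unique:
  fixes xs ys :: "'a::order list"
  shows "sorted_wrt (<) xs \<Longrightarrow> sorted_wrt (<) ys \<Longrightarrow> set xs = set ys \<Longrightarrow> xs = ys"
proof (induction xs arbitrary: ys)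
  case Nil thus ?case by simp
next
  case (Cons x xs)
  then obtain y ys' where ys: "ys = y # ys'" by (cases ys) auto
  have "x = y"
  proof (rule ccontr)
    assume ne: "x \<noteq> y"
    have "y \<in> set xs" using Cons.prems ys ne by (metis list.set_intros(1) set_ConsD)
    hence "x < y" using Cons.prems(1) by simp
    have "x \<in> set ys'" using Cons.prems ys ne by (metis list.set_intros(1) set_ConsD)
    hence "y < x" using Cons.prems(2) ys by simp
    with \<open>x < y\<close> show False by simp
  qed
  have "x \<notin> set xs" using Cons.prems(1) by auto
  moreover have "x \<notin> set ys'" using Cons.prems(2) ys \<open>x = y\<close> by auto
  ultimately have "set xs = set ys'" using Cons.prems(3) ys \<open>x = y\<close> by auto
  then have "xs = ys'" using Cons.IH Cons.prems ys by simp
  thus ?case using ys \<open>x = y\<close> by simp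
qed

lemma cpairs_list:
  fixes u :: "'a::order list"
  assumes "sorted_wrt (<) u"
  shows "cpairs (set u) = {(u!i, u!j) | i j. i < j \<and> j < length u}"
proof
  show "{(u!i, u!j) | i j. i < j \<and> j < length u} \<subseteq> cpairs (set u)"
    using assms by (auto simp: cpairs_def sorted_wrt_nth_less)
next
  show "cpairs (set u) \<subseteq> {(u!i, u!j) | i j. i < j \<and> j < length u}"
  proof
    fix p assume "p \<in> cpairs (set u)"
    then obtain a b where p: "p = (a,b)" "a \<in> set u" "b \<in> set u" "a < b" by (auto simp: cpairs_def)
    then obtain i j where ij: "i < length u" "j < length u" "u!i = a" "u!j = b"
      by (metis in_set_conv_nth)
    have "i < j"
    proof (rule ccontr)
      assume "\<not> i < j"
      then consider "i = j" | "j < i" by linarith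
      then show False
      proof cases
        case 1 then show ?thesis using ij p by simp
      next
        case 2 then have "b < a" using ij assms sorted_wrt_nth_less by metis
        then show ?thesis using p by simp
      qed
    qed
    thus "p \<in> {(u!i, u!j) | i j. i < j \<and> j < length u}" using ij p by auto
  qed
qed

definition inc_l :: "('a \<times> 'a \<Rightarrow> 'a \<times> 'a) \<Rightarrow> 'a list \<Rightarrow> 'a list \<Rightarrow> bool" where
  "inc_l th u v \<longleftrightarrow> length u = length v \<and>
     (\<forall>i j. i < j \<and> j < length u \<longrightarrow> th (u ! i, u ! j) = (v ! i, v ! j))"

definition dec_l :: "('a \<times> 'a \<Rightarrow> 'a \<times> 'a) \<Rightarrow> 'a list \<Rightarrow> 'a list \<Rightarrow> bool" where
  "dec_l th u v \<longleftrightarrow> length u = length v \<and>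
     (\<forall>i j. i < j \<and> j < length u \<longrightarrow> th (u ! i, u ! j) = (v ! (length u - 1 - j), v ! (length u - 1 - i)))"

lemma inc_l_pairs:
  fixes u v :: "'a::order list"
  assumes "sorted_wrt (<) u" "sorted_wrt (<) v" "inc_l th u v"
  shows "th ` cpairs (set u) = cpairs (set v)"
  using assms unfolding cpairs_list[OF assms(1)] cpairs_list[OF assms(2)] inc_l_def
  by (auto simp: image_iff) (metis)+

lemma dec_l_pairs:
  fixes u v :: "'a::order list"
  assumes "sorted_wrt (<) u" "sorted_wrt (<) v" "dec_l th u v"
  shows "th ` cpairs (set u) = cpairs (set v)"
proof -
  let ?m = "length u"
  have L: "length v = ?m" and E: "\<And>i j. i < j \<Longrightarrow> j < ?m \<Longrightarrow> th (u!i, u!j) = (v!(?m-1-j), v!(?m-1-i))"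
    using assms(3) by (auto simp: dec_l_def)
  show ?thesis unfolding cpairs_list[OF assms(1)] cpairs_list[OF assms(2)]
  proof
    show "th ` {(u!i, u!j) | i j. i < j \<and> j < ?m} \<subseteq> {(v!i, v!j) | i j. i < j \<and> j < length v}"
    proof
      fix p assume "p \<in> th ` {(u!i, u!j) | i j. i < j \<and> j < ?m}"
      then obtain i j where "i < j" "j < ?m" "p = th (u!i, u!j)" by auto
      then have "p = (v!(?m-1-j), v!(?m-1-i))" "?m-1-j < ?m-1-i" "?m-1-i < length v"
        using E L by auto
      then show "p \<in> {(v!i, v!j) | i j. i < j \<and> j < length v}" by blast
    qed
  next
    show "{(v!i, v!j) | i j. i < j \<and> j < length v} \<subseteq> th ` {(u!i, u!j) | i j. i < j \<and> j < ?m}"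
    proof
      fix p assume "p \<in> {(v!i, v!j) | i j. i < j \<and> j < length v}"
      then obtain i j where ij: "i < j" "j < ?m" "p = (v!i, v!j)" using L by auto
      have "th (u!(?m-1-j), u!(?m-1-i)) = (v!(?m-1-(?m-1-i)), v!(?m-1-(?m-1-j)))"
        using E ij by auto
      also have "\<dots> = p" using ij by (simp add: Suc_diff_Suc)
      finally have "p = th (u!(?m-1-j), u!(?m-1-i))" by simp
      moreover have "?m-1-j < ?m-1-i" "?m-1-i < ?m" using ij by auto
      ultimately show "p \<in> th ` {(u!i, u!j) | i j. i < j \<and> j < ?m}" by blast
    qed
  qed
qed

lemma inc_to_l: "increasing_to X th C D \<longleftrightarrow> C \<in> max_chains X \<and> D \<in> max_chains X \<and>
  (\<exists>u v. sorted_wrt (<) u \<and> set u = C \<and> sorted_wrt (<) v \<and> set v = D \<and> inc_l th u v)"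
  by (auto simp: increasing_to_def inc_l_def)

lemma dec_to_l: "decreasing_to X th C D \<longleftrightarrow> C \<in> max_chains X \<and> D \<in> max_chains X \<and>
  (\<exists>u v. sorted_wrt (<) u \<and> set u = C \<and> sorted_wrt (<) v \<and> set v = D \<and> dec_l th u v)"
  by (auto simp: decreasing_to_def dec_l_def)

lemma chain_image_pairs:
  "chain_image X th C D \<Longrightarrow> th ` cpairs C = cpairs D"
  unfolding chain_image_def inc_to_l dec_to_l using inc_l_pairs dec_l_pairs by metis

lemma chain_image_mc: "chain_image X th C D \<Longrightarrow> C \<in> max_chains X \<and> D \<in> max_chains X"
  unfolding chain_image_def inc_to_l dec_to_l by blast

lemma chain_image_lists: "chain_image X th C D \<Longrightarrow>
   \<exists>u v. sorted_wrt (<) u \<and> set u = C \<and> sorted_wrt (<) v \<and> set v = D \<and> length u = length v"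
  unfolding chain_image_def inc_to_l dec_to_l inc_l_def dec_l_def by metis

lemma mc_chain: "C \<in> max_chains X \<Longrightarrow> is_chain X C"
  by (simp add: max_chains_def)

lemma mc_ins: "C \<in> max_chains X \<Longrightarrow> is_chain X (insert z C) \<Longrightarrow> z \<in> C"
  unfolding max_chains_def by blast

lemma cover: "is_chain X C \<Longrightarrow> cpairs C \<noteq> {} \<Longrightarrow> C = fst ` cpairs C \<union> snd ` cpairs C"
proof
  assume ch: "is_chain X C" and ne: "cpairs C \<noteq> {}"
  show "C \<subseteq> fst ` cpairs C \<union> snd ` cpairs C"
  proof
    fix c assume c: "c \<in> C"
    obtain a b where ab: "a \<in> C" "b \<in> C" "a < b" using ne by (auto simp: cpairs_def)
    show "c \<in> fst ` cpairs C \<union> snd ` cpairs C"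
    proof (cases "c = a")
      case True then show ?thesis using ab by (force simp: cpairs_def)
    next
      case False
      then have "c < a \<or> a < c" using ch c ab unfolding is_chain_def by (metis order.order_iff_strict)
      then show ?thesis using ab c by (force simp: cpairs_def)
    qed
  qed
qed (auto simp: cpairs_def)

lemma empty_pairs_X:
  assumes "poset_connected X" "C \<in> max_chains X" "cpairs C = {}"
  shows "C = X"
proof -
  have ch: "is_chain X C" using assms(2) mc_chain by blast
  obtain x0 where x0: "x0 \<in> X" using assms(1) by (auto simp: poset_connected_def)
  have "C \<noteq> {}"
  proof
    assume "C = {}"
    have "is_chain X (insert x0 C)" using x0 \<open>C = {}\<close> by (simp add: is_chain_def)
    then show False using mc_ins[OF assms(2)] \<open>C = {}\<close> by blast
  qed
  then obtain c where c: "c \<in> C" by blast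
  have eq: "\<And>a b. a \<in> C \<Longrightarrow> b \<in> C \<Longrightarrow> a = b"
  proof -
    fix a b assume "a \<in> C" "b \<in> C"
    then have "a \<le> b \<or> b \<le> a" using ch by (auto simp: is_chain_def)
    then show "a = b" using assms(3) \<open>a \<in> C\<close> \<open>b \<in> C\<close> unfolding cpairs_def
      by (auto simp: order.order_iff_strict)
  qed
  have "y \<in> C" if "y \<in> X" for y
  proof -
    have "(c, y) \<in> ({(a, b). a \<in> X \<and> b \<in> X \<and> (a \<le> b \<or> b \<le> a)})\<^sup>*"
      using assms(1) that c ch by (auto simp: poset_connected_def is_chain_def)
    then show ?thesis
    proof (induction rule: rtrancl_induct)
      case base then show ?case using c .
    next
      case (step a b)
      have "is_chain X (insert b C)"
        using step ch eq unfolding is_chain_def by auto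
      then show ?case using mc_ins[OF assms(2)] by blast
    qed
  qed
  then show ?thesis using ch by (auto simp: is_chain_def)
qed

lemma chain_image_unique:
  assumes "poset_connected X" "chain_image X th C D1" "chain_image X th C D2"
  shows "D1 = D2"
proof -
  have p: "cpairs D1 = cpairs D2" using chain_image_pairs assms(2,3) by metis
  have m: "C \<in> max_chains X" "D1 \<in> max_chains X" "D2 \<in> max_chains X"
    using chain_image_mc assms by metis+
  show ?thesis
  proof (cases "cpairs D1 = {}")
    case True
    then show ?thesis using empty_pairs_X[OF assms(1)] m p by metis
  next
    case False
    then show ?thesis using cover[OF mc_chain[OF m(2)]] cover[OF mc_chain[OF m(3)]] p by metis
  qed
qed



lemma sorted_bounds:
  fixes v :: "'a::order list"
  assumes "sorted_wrt (<) v" "c \<in> set v"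
  shows "v!0 \<le> c \<and> c \<le> v!(length v - 1)"
proof -
  obtain k where k: "k < length v" "v!k = c" using assms(2) by (metis in_set_conv_nth)
  have "v!0 \<le> v!k" using assms(1) k sorted_wrt_nth_less[OF assms(1), of 0 k]
    by (cases "k = 0") auto
  moreover have "v!k \<le> v!(length v - 1)"
  proof (cases "k = length v - 1")
    case False
    then have "k < length v - 1" using k by linarith
    then have "v!k < v!(length v - 1)" using sorted_wrt_nth_less[OF assms(1), of k "length v - 1"] k by simp
    then show ?thesis by (rule order.strict_implies_order)
  qed simp
  ultimately show ?thesis using k by simp
qed

lemma mc_ends:
  fixes v :: "'a::order list"
  assumes m: "set v \<in> max_chains X" and s: "sorted_wrt (<) v" and ne: "v \<noteq> []"
  shows "v!0 \<in> min_elems X" "v!(length v - 1) \<in> max_elems X"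
proof -
  have ch: "is_chain X (set v)" using m mc_chain by blast
  have in0: "v!0 \<in> set v" "v!(length v - 1) \<in> set v" using ne by auto
  show "v!0 \<in> min_elems X"
  proof (rule ccontr)
    assume "v!0 \<notin> min_elems X"
    then obtain y where y: "y \<in> X" "y < v!0" using ch in0 by (auto simp: min_elems_def is_chain_def)
    have "\<forall>c\<in>set v. y \<le> c" using y sorted_bounds[OF s] by (meson order.strict_trans2 order.strict_implies_order)
    then have "is_chain X (insert y (set v))" using ch y
      unfolding is_chain_def by auto
    then have "y \<in> set v" using mc_ins[OF m] by blast
    then show False using y sorted_bounds[OF s] by (meson order.strict_iff_not)
  qed
  show "v!(length v - 1) \<in> max_elems X"
  proof (rule ccontr)
    assume "v!(length v - 1) \<notin> max_elems X"
    then obtain y where y: "y \<in> X" "v!(length v - 1) < y" using ch in0 by (auto simp: max_elems_def is_chain_def)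
    have "\<forall>c\<in>set v. c \<le> y" using y sorted_bounds[OF s] by (meson order.strict_trans1 order.strict_implies_order)
    then have "is_chain X (insert y (set v))" using ch y
      unfolding is_chain_def by auto
    then have "y \<in> set v" using mc_ins[OF m] by blast
    then show False using y sorted_bounds[OF s] by (meson order.strict_iff_not)
  qed
qed

definition fp :: "'a list \<Rightarrow> 'a \<times> 'a" where "fp v = (v!0, v!1)"
definition lp :: "'a list \<Rightarrow> 'a \<times> 'a" where "lp v = (v!(length v - 2), v!(length v - 1))"

lemma mc_ends3:
  fixes v :: "'a::order list"
  assumes m: "set v \<in> max_chains X" and s: "sorted_wrt (<) v" and l: "length v \<ge> 3"
  shows "v!1 \<notin> min_elems X" "v!1 \<notin> max_elems X" "v!(length v - 2) \<notin> min_elems X"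
    "v!(length v - 2) \<notin> max_elems X" "v!1 \<in> set v" "v!(length v - 2) \<in> set v"
    "fp v \<noteq> lp v"
proof -
  have X: "set v \<subseteq> X" using m mc_chain by (auto simp: is_chain_def)
  have a: "v!0 < v!1" "v!1 < v!2" "v!(length v - 3) < v!(length v - 2)" "v!(length v - 2) < v!(length v - 1)"
    "v!1 < v!(length v - 1)"
    using l sorted_wrt_nth_less[OF s] by auto
  have b: "v!0 \<in> X" "v!1 \<in> X" "v!2 \<in> X" "v!(length v - 3) \<in> X" "v!(length v - 2) \<in> X" "v!(length v - 1) \<in> X"
  proof -
    have "\<And>i. i < length v \<Longrightarrow> v!i \<in> X" using X by auto
    then show "v!0 \<in> X" "v!1 \<in> X" "v!2 \<in> X" "v!(length v - 3) \<in> X" "v!(length v - 2) \<in> X" "v!(length v - 1) \<in> X"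
    proof -
      have "0 < length v" "1 < length v" "2 < length v" "length v - 3 < length v" "length v - 2 < length v" "length v - 1 < length v"
        using l by linarith+
      then show "v!0 \<in> X" "v!1 \<in> X" "v!2 \<in> X" "v!(length v - 3) \<in> X" "v!(length v - 2) \<in> X" "v!(length v - 1) \<in> X"
        using \<open>\<And>i. i < length v \<Longrightarrow> v!i \<in> X\<close> by blast+
    qed
  qed
  show "v!1 \<notin> min_elems X" "v!1 \<notin> max_elems X" "v!(length v - 2) \<notin> min_elems X"
    "v!(length v - 2) \<notin> max_elems X"
    using a b unfolding min_elems_def max_elems_def by blast+
  show "v!1 \<in> set v" "v!(length v - 2) \<in> set v" using l by auto
  show "fp v \<noteq> lp v" using a(5) unfolding fp_def lp_def by auto
qed

lemma share:
  fixes v y :: "'a::order list"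
  assumes mv: "set v \<in> max_chains X" and sv: "sorted_wrt (<) v" and lv: "length v \<ge> 3"
    and my: "set y \<in> max_chains X" and sy: "sorted_wrt (<) y" and ly: "length y \<ge> 3"
    and t1: "t = fp v \<or> t = lp v" and t2: "t = fp y \<or> t = lp y"
  shows "(set v, set y) \<in> linked X \<and> (t = fp v \<longleftrightarrow> t = fp y)"
proof -
  note ev = mc_ends3[OF mv sv lv] and ey = mc_ends3[OF my sy ly]
  have e1v: "v!(length v - 1) \<in> max_elems X" using mc_ends(2)[OF mv sv] lv by (metis list.size(3) not_numeral_le_zero)
  have e1y: "y!(length y - 1) \<in> max_elems X" using mc_ends(2)[OF my sy] ly by (metis list.size(3) not_numeral_le_zero)
  show ?thesis
  proof (cases "t = fp v")
    case True
    show ?thesis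
    proof (cases "t = fp y")
      case True
      then have "v!1 = y!1" using \<open>t = fp v\<close> by (simp add: fp_def)
      then show ?thesis using ev ey mv my True \<open>t = fp v\<close> unfolding linked_def by auto
    next
      case False
      then have "t = lp y" using t2 by simp
      then have "v!1 = y!(length y - 1)" using \<open>t = fp v\<close> by (simp add: fp_def lp_def)
      then show ?thesis using ev e1y by simp
    qed
  next
    case False
    then have tl: "t = lp v" using t1 by simp
    show ?thesis
    proof (cases "t = fp y")
      case True
      then have "v!(length v - 1) = y!1" using tl by (simp add: fp_def lp_def)
      then show ?thesis using ey e1v by simp
    next
      case False
      then have "t = lp y" using t2 by simp
      then have "v!(length v - 2) = y!(length y - 2)" using tl by (simp add: lp_def)
      then show ?thesis using ev ey mv my False \<open>t \<noteq> fp v\<close> unfolding linked_def by auto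
    qed
  qed
qed

lemma inc_l_ends:
  assumes "inc_l th u v" "length u \<ge> 2"
  shows "th (fp u) = fp v" "th (lp u) = lp v"
proof -
  have a: "0 < (1::nat)" "1 < length u" "length u - 2 < length u - 1" "length u - 1 < length u"
    using assms(2) by auto
  show "th (fp u) = fp v" "th (lp u) = lp v" using assms(1) a unfolding inc_l_def fp_def lp_def
    by auto
qed

lemma dec_l_ends:
  assumes "dec_l th u v" "length u \<ge> 2"
  shows "th (fp u) = lp v" "th (lp u) = fp v"
proof -
  have a: "0 < (1::nat)" "1 < length u" "length u - 2 < length u - 1" "length u - 1 < length u"
    using assms(2) by auto
  have b: "length u - 1 - (length u - 1) = 0" "length u - 1 - (length u - 2) = 1" "length u - 1 - 1 = length u - 2"
    using assms(2) by auto
  show "th (fp u) = lp v" "th (lp u) = fp v" using assms(1) a b unfolding dec_l_def fp_def lp_def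
    by auto
qed



lemma sorted_cmp:
  fixes l :: "'a::order list"
  assumes "sorted_wrt (<) l" "a \<in> set l" "b \<in> set l"
  shows "a \<le> b \<or> b \<le> a"
proof -
  obtain i j where ij: "i < length l" "j < length l" "l!i = a" "l!j = b" using assms(2,3) by (metis in_set_conv_nth)
  consider "i < j" | "i = j" | "j < i" by linarith
  then show ?thesis
  proof cases
    case 1 then show ?thesis using sorted_wrt_nth_less[OF assms(1) 1 ij(2)] ij by auto
  next
    case 2 then show ?thesis using ij by auto
  next
    case 3 then show ?thesis using sorted_wrt_nth_less[OF assms(1) 3 ij(1)] ij by auto
  qed
qed

lemma emax:
  fixes u1 u2 w1 w2 :: "'a::order list"
  assumes mC: "set (u1 @ x # u2) \<in> max_chains X" and sC: "sorted_wrt (<) (u1 @ x # u2)"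
    and mD: "set (w1 @ x # w2) \<in> max_chains X" and sD: "sorted_wrt (<) (w1 @ x # w2)"
  shows "sorted_wrt (<) (u1 @ x # w2)" "set (u1 @ x # w2) \<in> max_chains X"
proof -
  have u1x: "\<forall>a\<in>set u1. a < x" and xu2: "\<forall>b\<in>set u2. x < b" and su1: "sorted_wrt (<) u1"
    using sC by (auto simp: sorted_wrt_append)
  have xw2: "\<forall>b\<in>set w2. x < b" and sxw2: "sorted_wrt (<) (x # w2)"
    using sD by (auto simp: sorted_wrt_append)
  show se: "sorted_wrt (<) (u1 @ x # w2)"
  proof -
    have "\<forall>a\<in>set u1. \<forall>b\<in>set (x # w2). a < b"
    proof (intro ballI)
      fix a b assume a: "a \<in> set u1" and b: "b \<in> set (x # w2)"
      have ax: "a < x" using a u1x by blast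
      from b have "b = x \<or> b \<in> set w2" by simp
      then show "a < b"
      proof
        assume "b \<in> set w2" then have "x < b" using xw2 by blast
        then show ?thesis using ax by (meson order.strict_trans)
      qed (use ax in simp)
    qed
    then show ?thesis unfolding sorted_wrt_append using su1 sxw2 by blast
  qed
  let ?E = "set (u1 @ x # w2)"
  have chC: "is_chain X (set (u1 @ x # u2))" and chD: "is_chain X (set (w1 @ x # w2))"
    using mC mD mc_chain by blast+
  have EX: "?E \<subseteq> X" using chC chD by (auto simp: is_chain_def)
  have chE: "is_chain X ?E" unfolding is_chain_def using EX sorted_cmp[OF se] by blast
  have "C'' = ?E" if c: "is_chain X C''" "?E \<subseteq> C''" for C''
  proof
    show "C'' \<subseteq> ?E"
    proof
      fix z assume z: "z \<in> C''"
      have xC: "x \<in> C''" using c by auto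
      have zX: "z \<in> X" using c z by (auto simp: is_chain_def)
      have "z \<le> x \<or> x \<le> z" using c z xC by (auto simp: is_chain_def)
      then show "z \<in> ?E"
      proof
        assume zx: "z \<le> x"
        have "\<forall>c\<in>set (u1 @ x # u2). z \<le> c \<or> c \<le> z"
        proof
          fix c assume "c \<in> set (u1 @ x # u2)"
          then have "c \<in> ?E \<or> c \<in> set u2" by auto
          then show "z \<le> c \<or> c \<le> z"
          proof
            assume "c \<in> ?E" then show ?thesis using c z by (auto simp: is_chain_def)
          next
            assume "c \<in> set u2" then have "x < c" using xu2 by auto
            then show ?thesis using zx by auto
          qed
        qed
        then have "is_chain X (insert z (set (u1 @ x # u2)))" using chC zX unfolding is_chain_def by auto
        then have "z \<in> set (u1 @ x # u2)" using mc_ins[OF mC] by blast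
        moreover have "z \<notin> set u2" using xu2 zx by (auto simp: order.strict_iff_not)
        ultimately show ?thesis by auto
      next
        assume zx: "x \<le> z"
        have "\<forall>c\<in>set (w1 @ x # w2). z \<le> c \<or> c \<le> z"
        proof
          fix c assume "c \<in> set (w1 @ x # w2)"
          then have "c \<in> ?E \<or> c \<in> set w1" by auto
          then show "z \<le> c \<or> c \<le> z"
          proof
            assume "c \<in> ?E" then show ?thesis using c z by (auto simp: is_chain_def)
          next
            assume "c \<in> set w1" then have "c < x" using sD by (auto simp: sorted_wrt_append)
            then show ?thesis using zx by auto
          qed
        qed
        then have "is_chain X (insert z (set (w1 @ x # w2)))" using chD zX unfolding is_chain_def by auto
        then have "z \<in> set (w1 @ x # w2)" using mc_ins[OF mD] by blast
        moreover have "z \<notin> set w1" using sD zx by (auto simp: sorted_wrt_append order.strict_iff_not)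
        ultimately show ?thesis by auto
      qed
    qed
  qed (use c in auto)
  then show "?E \<in> max_chains X" using chE unfolding max_chains_def by blast
qed

lemma fp_cons: "fp (a # b # p) = (a, b)" by (simp add: fp_def)
lemma lp_snoc: "lp (p @ [c, b]) = (c, b)" by (simp add: lp_def nth_append)

lemma ce_sym: "(C, D) \<in> chain_equiv X \<Longrightarrow> (D, C) \<in> chain_equiv X"
proof -
  assume a: "(C, D) \<in> chain_equiv X"
  let ?S = "linked X \<union> (linked X)\<inverse>"
  have "(C, D) \<in> ?S\<^sup>*" using a by (simp add: chain_equiv_def)
  then have "(D, C) \<in> (?S\<inverse>)\<^sup>*" by (rule rtrancl_converseI)
  moreover have "?S\<inverse> = ?S" by auto
  ultimately show ?thesis using a unfolding chain_equiv_def by simp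
qed

lemma ce_trans: "(C, D) \<in> chain_equiv X \<Longrightarrow> (D, E) \<in> chain_equiv X \<Longrightarrow> (C, E) \<in> chain_equiv X"
  unfolding chain_equiv_def by (auto intro: rtrancl_trans)

lemma ce_refl: "C \<in> max_chains X \<Longrightarrow> (C, C) \<in> chain_equiv X"
  unfolding chain_equiv_def by auto

lemma ce_equiv: "equiv (max_chains X) (chain_equiv X)"
proof -
  have "refl_on (max_chains X) (chain_equiv X)"
    by (rule refl_onI) (auto simp: chain_equiv_def)
  moreover have "sym (chain_equiv X)" by (rule symI) (rule ce_sym)
  moreover have "trans (chain_equiv X)" by (rule transI) (rule ce_trans)
  moreover have "chain_equiv X \<subseteq> max_chains X \<times> max_chains X" by (auto simp: chain_equiv_def)
  ultimately show ?thesis unfolding equiv_def by blast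
qed



locale mctx =
  fixes X :: "'a::order set" and th :: "'a \<times> 'a \<Rightarrow> 'a \<times> 'a"
  assumes conn: "poset_connected X" and thM: "th \<in> M_set X"
begin

definition img where "img C = (SOME D. chain_image X th C D)"

lemma img: "C \<in> max_chains X \<Longrightarrow> chain_image X th C (img C)"
  using thM unfolding M_set_def img_def by (metis (mono_tags, lifting) mem_Collect_eq someI_ex)

lemma img_mc: "C \<in> max_chains X \<Longrightarrow> img C \<in> max_chains X"
  using img chain_image_mc by metis

lemma img_eq: "chain_image X th C D \<Longrightarrow> D = img C"
  using chain_image_unique[OF conn] img chain_image_mc by metis

lemma ctype:
  assumes m: "C \<in> max_chains X" and su: "sorted_wrt (<) u" and u: "set u = C" and l: "length u \<ge> 3"
    and sv: "sorted_wrt (<) v" and v: "set v = img C"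
  shows "length v = length u"
    "(\<exists>D. increasing_to X th C D) \<longleftrightarrow> th (fp u) = fp v"
    "(\<exists>D. increasing_to X th C D) \<longleftrightarrow> th (lp u) = lp v"
    "(\<exists>D. decreasing_to X th C D) \<longleftrightarrow> \<not> (\<exists>D. increasing_to X th C D)"
    "th (fp u) = fp v \<or> th (fp u) = lp v"
    "th (lp u) = fp v \<or> th (lp u) = lp v"
proof -
  have incl: "inc_l th u v" if "\<exists>D. increasing_to X th C D"
  proof -
    from that obtain D where D: "increasing_to X th C D" by blast
    then have "D = img C" using img_eq chain_image_def by metis
    then obtain u' v' where "sorted_wrt (<) u'" "set u' = C" "sorted_wrt (<) v'" "set v' = img C" "inc_l th u' v'"
      using D inc_to_l by metis
    then show ?thesis using sorted_unique su u sv v by metis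
  qed
  have decl: "dec_l th u v" if "\<exists>D. decreasing_to X th C D"
  proof -
    from that obtain D where D: "decreasing_to X th C D" by blast
    then have "D = img C" using img_eq chain_image_def by metis
    then obtain u' v' where "sorted_wrt (<) u'" "set u' = C" "sorted_wrt (<) v'" "set v' = img C" "dec_l th u' v'"
      using D dec_to_l by metis
    then show ?thesis using sorted_unique su u sv v by metis
  qed
  have either: "(\<exists>D. increasing_to X th C D) \<or> (\<exists>D. decreasing_to X th C D)"
    using img[OF m] chain_image_def by metis
  show len: "length v = length u" using either incl decl inc_l_def dec_l_def by metis
  have l2: "length u \<ge> 2" using l by simp
  have ne: "fp v \<noteq> lp v" using mc_ends3(7)[OF _ sv] img_mc[OF m] v len l by metis
  show "(\<exists>D. increasing_to X th C D) \<longleftrightarrow> th (fp u) = fp v"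
    using incl decl either inc_l_ends[OF _ l2] dec_l_ends[OF _ l2] ne by metis
  show "(\<exists>D. increasing_to X th C D) \<longleftrightarrow> th (lp u) = lp v"
    using incl decl either inc_l_ends[OF _ l2] dec_l_ends[OF _ l2] ne by metis
  show "(\<exists>D. decreasing_to X th C D) \<longleftrightarrow> \<not> (\<exists>D. increasing_to X th C D)"
    using incl decl either inc_l_ends[OF _ l2] dec_l_ends[OF _ l2] ne by metis
  show "th (fp u) = fp v \<or> th (fp u) = lp v"
    using incl decl either inc_l_ends[OF _ l2] dec_l_ends[OF _ l2] by metis
  show "th (lp u) = fp v \<or> th (lp u) = lp v"
    using incl decl either inc_l_ends[OF _ l2] dec_l_ends[OF _ l2] by metis
qed

lemma mc_list: "C \<in> max_chains X \<Longrightarrow> \<exists>u. sorted_wrt (<) u \<and> set u = C"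
  using img chain_image_lists by metis

lemma img_list: "C \<in> max_chains X \<Longrightarrow> \<exists>v. sorted_wrt (<) v \<and> set v = img C"
  using img chain_image_lists by metis

lemma link_step:
  assumes lk: "(C, D) \<in> linked X"
  shows "(img C, img D) \<in> chain_equiv X \<and>
    ((\<exists>D'. increasing_to X th C D') \<longleftrightarrow> (\<exists>D'. increasing_to X th D D')) \<and>
    ((\<exists>D'. decreasing_to X th C D') \<longleftrightarrow> (\<exists>D'. decreasing_to X th D D'))"
proof -
  obtain x where mC: "C \<in> max_chains X" and mD: "D \<in> max_chains X" and x: "x \<in> C" "x \<in> D"
    "x \<notin> min_elems X" "x \<notin> max_elems X"
    using lk unfolding linked_def by blast
  obtain u where su: "sorted_wrt (<) u" and u: "set u = C" using mc_list[OF mC] by blast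
  obtain w where sw: "sorted_wrt (<) w" and w: "set w = D" using mc_list[OF mD] by blast
  obtain v where sv: "sorted_wrt (<) v" and v: "set v = img C" using img_list[OF mC] by blast
  obtain z where sz: "sorted_wrt (<) z" and z: "set z = img D" using img_list[OF mD] by blast
  obtain u1 u2 where uu: "u = u1 @ x # u2" using x(1) u split_list by metis
  obtain w1 w2 where ww: "w = w1 @ x # w2" using x(2) w split_list by metis
  have u1: "u1 \<noteq> []"
  proof
    assume "u1 = []"
    then have "u!0 = x" using uu by simp
    then show False using mc_ends(1)[of u X] mC u su uu x(3) by auto
  qed
  have u2: "u2 \<noteq> []"
  proof
    assume "u2 = []"
    then have "u!(length u - 1) = x" using uu by (simp add: nth_append)
    then show False using mc_ends(2)[of u X] mC u su uu x(4) by auto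
  qed
  have w2: "w2 \<noteq> []"
  proof
    assume "w2 = []"
    then have "w!(length w - 1) = x" using ww by (simp add: nth_append)
    then show False using mc_ends(2)[of w X] mD w sw ww x(4) by auto
  qed
  have w1: "w1 \<noteq> []"
  proof
    assume "w1 = []"
    then have "w!0 = x" using ww by simp
    then show False using mc_ends(1)[of w X] mD w sw ww x(3) by auto
  qed
  define e where "e = u1 @ x # w2"
  have se: "sorted_wrt (<) e" and mE: "set e \<in> max_chains X"
    using emax[of u1 x u2 X w1 w2] mC mD su sw u w uu ww unfolding e_def by auto
  have lu: "length u \<ge> 3" using uu u1 u2 by (cases u1; cases u2) auto
  have lw: "length w \<ge> 3" using ww w1 w2 by (cases w1; cases w2) auto
  have le: "length e \<ge> 3" using e_def u1 w2 by (cases u1; cases w2) auto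
  have fpe: "fp e = fp u"
  proof -
    obtain a u1' where a: "u1 = a # u1'" using u1 by (cases u1) auto
    show ?thesis
    proof (cases u1')
      case Nil then show ?thesis using a uu e_def by (simp add: fp_cons)
    next
      case (Cons c r) then show ?thesis using a uu e_def by (simp add: fp_cons)
    qed
  qed
  have lpe: "lp e = lp w"
  proof -
    obtain w2' b where b: "w2 = w2' @ [b]" using w2 by (cases w2 rule: rev_cases) auto
    show ?thesis
    proof (cases w2' rule: rev_cases)
      case Nil
      then have "e = u1 @ [x, b]" "w = w1 @ [x, b]" using b e_def ww by auto
      then show ?thesis by (simp add: lp_snoc)
    next
      case (snoc r c)
      then have "e = (u1 @ x # r) @ [c, b]" "w = (w1 @ x # r) @ [c, b]" using b e_def ww by auto
      then show ?thesis by (simp only: lp_snoc)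
    qed
  qed
  obtain y where sy: "sorted_wrt (<) y" and y: "set y = img (set e)" using img_list[OF mE] by blast
  note tC = ctype[OF mC su u lu sv v] and tE = ctype[OF mE se refl le sy y] and tD = ctype[OF mD sw w lw sz z]
  have mv: "set v \<in> max_chains X" using v img_mc[OF mC] by simp
  have my: "set y \<in> max_chains X" using y img_mc[OF mE] by simp
  have mz: "set z \<in> max_chains X" using z img_mc[OF mD] by simp
  have lv: "length v \<ge> 3" using tC(1) lu by simp
  have ly: "length y \<ge> 3" using tE(1) le by simp
  have lz: "length z \<ge> 3" using tD(1) lw by simp
  have s1: "(set v, set y) \<in> linked X \<and> (th (fp u) = fp v \<longleftrightarrow> th (fp u) = fp y)"
    using share[OF mv sv lv my sy ly] tC(5) tE(5) fpe by metis
  have s2: "(set y, set z) \<in> linked X \<and> (th (lp w) = fp y \<longleftrightarrow> th (lp w) = fp z)"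
    using share[OF my sy ly mz sz lz] tD(6) tE(6) lpe by metis
  have i1: "(\<exists>D'. increasing_to X th C D') \<longleftrightarrow> (\<exists>D'. increasing_to X th (set e) D')"
    using s1 tC(2) tE(2) fpe by metis
  have i2: "(\<exists>D'. increasing_to X th (set e) D') \<longleftrightarrow> (\<exists>D'. increasing_to X th D D')"
  proof -
    have "th (lp w) = lp z \<longleftrightarrow> th (lp w) = lp y"
      using s2 tD(6) tE(6) lpe mc_ends3(7)[OF my sy ly] mc_ends3(7)[OF mz sz lz] by metis
    then show ?thesis using tE(3) tD(3) lpe by metis
  qed
  have "(img C, img D) \<in> (linked X \<union> (linked X)\<inverse>)\<^sup>*"
    using s1 s2 v y z by (metis (no_types, lifting) UnI1 converse_rtrancl_into_rtrancl r_into_rtrancl)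
  then have ce: "(img C, img D) \<in> chain_equiv X"
    using img_mc[OF mC] img_mc[OF mD] unfolding chain_equiv_def by blast
  show ?thesis using ce i1 i2 tC(4) tE(4) tD(4) by blast
qed

end



context mctx begin

lemma path:
  assumes "(C, D) \<in> (linked X \<union> (linked X)\<inverse>)\<^sup>*" "C \<in> max_chains X"
  shows "D \<in> max_chains X \<and> (img C, img D) \<in> chain_equiv X \<and>
    ((\<exists>D'. increasing_to X th C D') \<longleftrightarrow> (\<exists>D'. increasing_to X th D D')) \<and>
    ((\<exists>D'. decreasing_to X th C D') \<longleftrightarrow> (\<exists>D'. decreasing_to X th D D'))"
  using assms(1)
proof (induction rule: rtrancl_induct)
  case base
  then show ?case using assms(2) ce_refl img_mc by blast
next
  case (step B E)
  from step.hyps(2) show ?case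
  proof
    assume "(B, E) \<in> linked X"
    then show ?thesis using step.IH link_step[of B E] ce_trans[of "img C" "img B" X "img E"]
      unfolding linked_def by auto
  next
    assume "(B, E) \<in> (linked X)\<inverse>"
    then have "(E, B) \<in> linked X" by simp
    then show ?thesis using step.IH link_step[of E B] ce_sym[of "img E" "img B" X] ce_trans[of "img C" "img B" X "img E"]
      unfolding linked_def by auto
  qed
qed

lemma ce_path: "(C, D) \<in> chain_equiv X \<Longrightarrow> D \<in> max_chains X \<and> (img C, img D) \<in> chain_equiv X \<and>
    ((\<exists>D'. increasing_to X th C D') \<longleftrightarrow> (\<exists>D'. increasing_to X th D D')) \<and>
    ((\<exists>D'. decreasing_to X th C D') \<longleftrightarrow> (\<exists>D'. decreasing_to X th D D'))"
  using path unfolding chain_equiv_def by blast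

lemma img_inj: "inj_on img (max_chains X)"
proof (rule inj_onI)
  fix C D assume C: "C \<in> max_chains X" and D: "D \<in> max_chains X" and eq: "img C = img D"
  have "th ` cpairs C = th ` cpairs D"
    using chain_image_pairs[OF img[OF C]] chain_image_pairs[OF img[OF D]] eq by simp
  moreover have "inj_on th (basis X)" using thM by (auto simp: M_set_def bij_betw_def)
  moreover have "cpairs C \<subseteq> basis X" "cpairs D \<subseteq> basis X"
    using mc_chain[OF C] mc_chain[OF D] by (auto simp: cpairs_def basis_def is_chain_def)
  ultimately have p: "cpairs C = cpairs D" using inj_on_image_eq_iff by metis
  show "C = D"
  proof (cases "cpairs C = {}")
    case True
    then show ?thesis using empty_pairs_X[OF conn] C D p by metis
  next
    case False
    then show ?thesis using cover[OF mc_chain[OF C]] cover[OF mc_chain[OF D]] p by metis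
  qed
qed

end

theorem lemma3p7:
  fixes X :: "'a::order set" and \<theta> :: "'a \<times> 'a \<Rightarrow> 'a \<times> 'a"
  assumes "finite X" and "poset_connected X" and "\<theta> \<in> M_set X"
  shows "(\<forall>C D C' D'. (C, D) \<in> chain_equiv X \<longrightarrow> chain_image X \<theta> C C' \<longrightarrow>
            chain_image X \<theta> D D' \<longrightarrow> (C', D') \<in> chain_equiv X)
       \<and> (\<exists>f. bij_betw f (max_chains X // chain_equiv X) (max_chains X // chain_equiv X) \<and>
            (\<forall>C C'. chain_image X \<theta> C C' \<longrightarrow>
               f (chain_equiv X `` {C}) = chain_equiv X `` {C'}))
       \<and> (\<forall>C C' D. increasing_to X \<theta> C C' \<longrightarrow> (C, D) \<in> chain_equiv X \<longrightarrow>
            (\<exists>D'. increasing_to X \<theta> D D'))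
       \<and> (\<forall>C C' D. decreasing_to X \<theta> C C' \<longrightarrow> (C, D) \<in> chain_equiv X \<longrightarrow>
            (\<exists>D'. decreasing_to X \<theta> D D'))"
proof -
  interpret mctx X \<theta> using assms(2,3) by unfold_locales
  let ?M = "max_chains X" and ?R = "chain_equiv X"
  have P1: "\<forall>C D C' D'. (C, D) \<in> ?R \<longrightarrow> chain_image X \<theta> C C' \<longrightarrow>
            chain_image X \<theta> D D' \<longrightarrow> (C', D') \<in> ?R"
    using ce_path img_eq by metis
  have P3: "\<forall>C C' D. increasing_to X \<theta> C C' \<longrightarrow> (C, D) \<in> ?R \<longrightarrow> (\<exists>D'. increasing_to X \<theta> D D')"
    using ce_path by metis
  have P4: "\<forall>C C' D. decreasing_to X \<theta> C C' \<longrightarrow> (C, D) \<in> ?R \<longrightarrow> (\<exists>D'. decreasing_to X \<theta> D D')"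
    using ce_path by metis
  define f where "f Q = ?R `` {img (SOME C. C \<in> Q)}" for Q
  have EQ: "equiv ?M ?R" by (rule ce_equiv)
  have fC: "f (?R `` {C}) = ?R `` {img C}" if C: "C \<in> ?M" for C
  proof -
    have "C \<in> ?R `` {C}" using ce_refl[OF C] by simp
    then have "(SOME C0. C0 \<in> ?R `` {C}) \<in> ?R `` {C}" by (rule someI)
    then have "(C, SOME C0. C0 \<in> ?R `` {C}) \<in> ?R" by simp
    then have "(img C, img (SOME C0. C0 \<in> ?R `` {C})) \<in> ?R" using ce_path by blast
    then have "?R `` {img C} = ?R `` {img (SOME C0. C0 \<in> ?R `` {C})}"
      using equiv_class_eq_iff[OF EQ] by blast
    then show ?thesis unfolding f_def by simp
  qed
  have finM: "finite ?M"
  proof -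
    have "?M \<subseteq> Pow X" by (auto simp: max_chains_def is_chain_def)
    then show ?thesis using assms(1) finite_subset by blast
  qed
  have imgM: "img ` ?M = ?M" using endo_inj_surj[OF finM _ img_inj] img_mc by blast
  have fQ: "f ` (?M // ?R) = ?M // ?R"
  proof
    show "f ` (?M // ?R) \<subseteq> ?M // ?R"
    proof
      fix Q assume "Q \<in> f ` (?M // ?R)"
      then obtain C where "C \<in> ?M" "Q = f (?R `` {C})" by (auto elim!: quotientE)
      then show "Q \<in> ?M // ?R" using fC img_mc by (simp add: quotientI)
    qed
  next
    show "?M // ?R \<subseteq> f ` (?M // ?R)"
    proof
      fix Q assume "Q \<in> ?M // ?R"
      then obtain D where D: "D \<in> ?M" "Q = ?R `` {D}" by (auto elim!: quotientE)
      then obtain C where C: "C \<in> ?M" "D = img C" using imgM by blast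
      then have "Q = f (?R `` {C})" using fC D by simp
      moreover have "?R `` {C} \<in> ?M // ?R" using C by (simp add: quotientI)
      ultimately show "Q \<in> f ` (?M // ?R)" by blast
    qed
  qed
  have finQ: "finite (?M // ?R)"
  proof -
    have "?R \<subseteq> ?M \<times> ?M" by (auto simp: chain_equiv_def)
    then show ?thesis using finite_quotient[OF finM] by blast
  qed
  have bij: "bij_betw f (?M // ?R) (?M // ?R)"
    unfolding bij_betw_def using fQ finite_surj_inj[OF finQ] by simp
  have "\<forall>C C'. chain_image X \<theta> C C' \<longrightarrow> f (?R `` {C}) = ?R `` {C'}"
    using fC img_eq chain_image_mc by metis
  then show ?thesis using P1 P3 P4 bij by blast
qed

end
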